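(* Let $q$ be a power of the prime $p$ and $n$ a positive integer. Let $f, h, k\in \mathbb{F}_q[x]$ with $k(\mathbb{F}_q)\subseteq\mathbb{F}_q^*$, and let $P(x)=f(\mathrm{Tr}_{q^n/q}(x))+k(\mathrm{Tr}_{q^n/q}(x))\cdot L_h(x)$. Then $P$ is a permutation polynomial of $\mathbb{F}_{q^n}$ if and only if $\gcd\left(h(x), \frac{x^n-1}{x-1}\right)=1$ and $Q(x)=n\cdot f(x)+h(1)k(x)\cdot x$ induces a permutation of $\mathbb{F}_q$. More specifically, $P$ is a permutation polynomial of $\mathbb{F}_{q^n}$ if and only if one of the following holds: (i) $p\mid n$, $\gcd(h(x), x^n-1)=1$, and $k(x)\cdot x$ is a permutation polynomial of $\mathbb{F}_q$; (ii) $p\nmid n$, $\gcd(h(x), x^n-1)=x-1$, and $f$ is a permutation polynomial of $\mathbb{F}_q$; (iii) $p\nmid n$, $\gcd(h(x), x^n-1)=1$, and $n f(x)+h(1)\cdot k(x)\cdot x$ is a permutation polynomial of $\mathbb{F}_q$.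
   Context: For $u(x)=\sum_{i=0}^m a_i x^i\in\mathbb{F}_q[x]$, its linearized $q$-associate is $L_u(x)=\sum_{i=0}^m a_i x^{q^i}$. $\mathrm{Tr}_{q^n/q}(x)=x+x^q+\cdots+x^{q^{n-1}}$. A permutation polynomial of a finite field is a polynomial inducing a bijection of it. *)

theory Defs
  imports "HOL-Computational_Algebra.Polynomial_Factorial"
begin

definition subfieldq :: "nat \<Rightarrow> 'a::field set" where
  "subfieldq q = {x. x ^ q = x}"

definition trace_qn :: "nat \<Rightarrow> nat \<Rightarrow> 'a::field \<Rightarrow> 'a" where
  "trace_qn q n x = (\<Sum>i<n. x ^ (q ^ i))"

definition linq :: "nat \<Rightarrow> 'a::field poly \<Rightarrow> 'a \<Rightarrow> 'a" where
  "linq q u x = (\<Sum>i\<le>degree u. coeff u i * x ^ (q ^ i))"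

end

theory Submission imports Defs "HOL-Computational_Algebra.Primes" begin

lemma power_card_same:
  fixes x :: "'a :: {finite,field}"
  shows   "x ^ card (UNIV :: 'a set) = x"
proof (cases "x = 0")
  case False
  have "x * (\<Prod>y\<in>UNIV-{0}. x * y) = x * x ^ (card (UNIV :: 'a set) - 1) * \<Prod>(UNIV-{0})"
    by (simp add: prod.distrib mult_ac)
  also have "x * x ^ (card (UNIV :: 'a set) - 1) = x ^ Suc (card (UNIV :: 'a set) - 1)"
    by (subst power_Suc) auto
  also have "Suc (card (UNIV :: 'a set) - 1) = card (UNIV :: 'a set)"
    using finite_UNIV_card_ge_0[where ?'a = 'a] by simp
  also have "(\<Prod>y\<in>UNIV-{0}. x * y) = (\<Prod>y\<in>UNIV-{0}. y)"
    by (rule prod.reindex_bij_witness[of _ "\<lambda>y. y / x" "\<lambda>y. x * y"]) (use False in auto)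
  finally show ?thesis
    by simp
qed (use finite_UNIV_card_ge_0[where ?'a = 'a] in auto)

lemma uf_field_gen: "(x::'a::field_gcd) \<noteq> 0 \<Longrightarrow> unit_factor x = x"
proof -
  assume "x \<noteq> 0"
  then have "is_unit x" using dvd_field_iff by blast
  then have "normalize x = 1" by (rule is_unit_normalize)
  then show ?thesis using unit_factor_mult_normalize[of x] by simp
qed

lemma inj_scale_gen: "(c::'a::field) \<noteq> 0 \<Longrightarrow> inj_on (\<lambda>x. c * g x) A \<longleftrightarrow> inj_on g A"
  by (auto simp: inj_on_def)

lemma core:
  fixes h Phi X L :: "'a::field_gcd poly" and f k :: "'a poly" and F :: "'a set" and h1 :: 'a
    and Q :: "'a \<Rightarrow> 'a" and n :: nat and P :: bool
  assumes L_def: "L = [:-1, 1::'a:]"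
  and Q_def: "Q = (\<lambda>x. of_nat n * poly f x + h1 * poly k x * x)"
  and h1_def: "h1 = poly h 1"
  and XL: "X = L * Phi"
  and pPhi: "poly Phi 1 = of_nat n"
  and pn: "P \<longleftrightarrow> of_nat n = (0::'a)"
  and Lp: "prime_elem L"
  and Ldvd: "\<And>u. L dvd u \<longleftrightarrow> poly u 1 = 0"
  and Lnu: "\<not> is_unit L"
  and bQ: "bij_betw Q F F \<longleftrightarrow> inj_on Q F"
  and bk: "bij_betw (\<lambda>x. poly k x * x) F F \<longleftrightarrow> inj_on (\<lambda>x. poly k x * x) F"
  and bf: "bij_betw (poly f) F F \<longleftrightarrow> inj_on (poly f) F"
  shows "(gcd h Phi = 1 \<and> bij_betw Q F F) \<longleftrightarrow>
      ((P \<and> gcd h X = 1 \<and> bij_betw (\<lambda>x. poly k x * x) F F)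
     \<or> (\<not> P \<and> gcd h X = L \<and> bij_betw (poly f) F F)
     \<or> (\<not> P \<and> gcd h X = 1 \<and> bij_betw Q F F))"
  proof (cases "h1 = 0")
    case False
    have cop: "coprime h L" using prime_elem_imp_coprime[OF Lp, of h] Ldvd[of h] False h1_def
      by (simp add: coprime_commute)
    have gX: "gcd h X = gcd h Phi" unfolding XL by (rule gcd_mult_right_left_cancel[OF cop])
    have nL: "gcd h X \<noteq> L"
    proof
      assume "gcd h X = L"
      then have "L dvd h" by (metis gcd_dvd1)
      then show False using Ldvd False h1_def by simp
    qed
    show ?thesis
    proof (cases "P")
      case True
      then have "Q = (\<lambda>x. h1 * (poly k x * x))" using pn unfolding Q_def by (auto simp: mult.assoc)
      then have "inj_on Q F \<longleftrightarrow> inj_on (\<lambda>x. poly k x * x) F" using inj_scale_gen[OF False] by simp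
      then show ?thesis using True gX bQ bk by simp
    next
      case False
      then show ?thesis using gX nL by simp
    qed
  next
    case True
    have LH: "L dvd h" using Ldvd True h1_def by simp
    then obtain h' where h': "h = L * h'" by (rule dvdE)
    show ?thesis
    proof (cases "P")
      case True
      have "L dvd Phi" using Ldvd pPhi pn True by simp
      then have g1: "L dvd gcd h Phi" using LH by simp
      have g2: "L dvd gcd h X" using LH XL by simp
      have "gcd h Phi \<noteq> 1"
      proof
        assume "gcd h Phi = 1"
        then have "L dvd 1" using g1 by simp
        then show False using Lnu by simp
      qed
      moreover have "gcd h X \<noteq> 1"
      proof
        assume "gcd h X = 1"
        then have "L dvd 1" using g2 by simp
        then show False using Lnu by simp
      qed
      ultimately show ?thesis using True by simp
    next
      case False
      have nz: "of_nat n \<noteq> (0::'a)" using pn False by simp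
      have copP: "coprime Phi L"
        using prime_elem_imp_coprime[OF Lp, of Phi] Ldvd[of Phi] pPhi nz by (simp add: coprime_commute)
      have gP: "gcd h Phi = gcd h' Phi" unfolding h' by (rule gcd_mult_left_left_cancel[OF copP])
      have nL: "normalize L = L" unfolding L_def by (intro poly_eqI) (simp add: coeff_normalize uf_field_gen)
      have gX: "gcd h X = L * gcd h' Phi"
        unfolding h' XL gcd_mult_left normalize_mult nL by simp
      have Lnz: "L \<noteq> 0" unfolding L_def by simp
      have e1: "gcd h X = L \<longleftrightarrow> gcd h Phi = 1" unfolding gX gP using Lnz
        by simp
      have e2: "gcd h X \<noteq> 1"
      proof
        assume "gcd h X = 1"
        then have "L dvd 1" using dvd_triv_left[of L "gcd h' Phi"] gX by simp
        then show False using Lnu by simp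
      qed
      have "Q = (\<lambda>x. of_nat n * poly f x)" unfolding Q_def using True by simp
      then have "inj_on Q F \<longleftrightarrow> inj_on (poly f) F" using inj_scale_gen[OF nz] by simp
      then show ?thesis using False e1 e2 bQ bf by simp
    qed
  qed


context
  fixes q m :: nat
  assumes pr: "prime CHAR('a::{finite,field_gcd})" and qdef: "q = CHAR('a)^m" and mpos: "m > 0"
begin

lemma q_gt1: "q > 1"
  using pr qdef mpos by (metis one_less_power prime_gt_1_nat)

lemma qpow: "q ^ j = CHAR('a) ^ (m * j)"
  by (simp add: qdef power_mult)

lemma frob_add: "(x + y :: 'a) ^ (q ^ j) = x ^ (q ^ j) + y ^ (q ^ j)"
  using freshmans_dream'[OF pr qpow] .

lemma frob_sum: "(sum g A :: 'a) ^ (q ^ j) = sum (\<lambda>i. g i ^ (q ^ j)) A"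
  using freshmans_dream_sum'[OF pr qpow] .

lemma frob_diff: "(x - y :: 'a) ^ (q ^ j) = x ^ (q ^ j) - y ^ (q ^ j)"
  using frob_add[of "x - y" y j] by (simp add: algebra_simps)

lemma frob_add1: "(x + y :: 'a) ^ q = x ^ q + y ^ q"
  using frob_add[of x y 1] by simp

lemma sub_pow: "(c::'a) \<in> subfieldq q \<Longrightarrow> c ^ (q ^ j) = c"
proof (induction j)
  case (Suc j)
  then show ?case unfolding subfieldq_def by (simp add: power_mult mult.commute[of q])
qed simp

lemma sub_add: "(a::'a) \<in> subfieldq q \<Longrightarrow> b \<in> subfieldq q \<Longrightarrow> a + b \<in> subfieldq q"
  unfolding subfieldq_def using frob_add1 by simp

lemma sub_mult: "(a::'a) \<in> subfieldq q \<Longrightarrow> b \<in> subfieldq q \<Longrightarrow> a * b \<in> subfieldq q"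
  unfolding subfieldq_def by (simp add: power_mult_distrib)

lemma sub_diff: "(a::'a) \<in> subfieldq q \<Longrightarrow> b \<in> subfieldq q \<Longrightarrow> a - b \<in> subfieldq q"
  unfolding subfieldq_def using frob_diff[of a b 1] by simp

lemma sub_0: "(0::'a) \<in> subfieldq q" unfolding subfieldq_def using q_gt1 by simp
lemma sub_1: "(1::'a) \<in> subfieldq q" unfolding subfieldq_def by simp

lemma sub_sum: "(\<And>i. i \<in> A \<Longrightarrow> g i \<in> subfieldq q) \<Longrightarrow> (sum g A :: 'a) \<in> subfieldq q"
  unfolding subfieldq_def using frob_sum[of g A 1] by simp

lemma sub_of_nat: "(of_nat k :: 'a) \<in> subfieldq q"
  by (induction k) (auto intro: sub_add sub_0 sub_1)

lemma sub_power: "(a::'a) \<in> subfieldq q \<Longrightarrow> a ^ k \<in> subfieldq q"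
  by (induction k) (auto intro: sub_mult sub_1)

lemma sub_poly: "\<forall>i. coeff u i \<in> subfieldq q \<Longrightarrow> (x::'a) \<in> subfieldq q \<Longrightarrow> poly u x \<in> subfieldq q"
  unfolding poly_altdef by (intro sub_sum sub_mult sub_power) auto

lemma finite_sub: "finite (subfieldq q :: 'a set)" by simp

lemma card_sub: "card (subfieldq q :: 'a set) \<le> q"
proof -
  let ?p = "monom (1::'a) q + [:0,-1:]"
  have dq: "degree ?p = q" using q_gt1 by (subst degree_add_eq_left) (auto simp: degree_monom_eq)
  have "?p \<noteq> 0" using dq q_gt1 by auto
  from card_poly_roots_bound[OF this] dq
  have "card {x. poly ?p x = 0} \<le> q" by simp
  moreover have "{x. poly ?p x = 0} = subfieldq q"
    unfolding subfieldq_def by (auto simp: poly_monom)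
  ultimately show ?thesis by simp
qed

lemma linq_sum: "degree (u::'a poly) < N \<Longrightarrow> linq q u x = (\<Sum>i<N. coeff u i * x ^ (q ^ i))"
  unfolding linq_def
  by (rule sum.mono_neutral_left) (auto simp: coeff_eq_0)

lemma linq_add: "linq q ((u::'a poly) + v) x = linq q u x + linq q v x"
proof -
  define N where "N = Suc (degree u + degree v)"
  have "degree (u + v) < N" "degree u < N" "degree v < N"
    using degree_add_le_max[of u v] by (auto simp: N_def)
  then show ?thesis by (simp add: linq_sum[of _ N] sum.distrib algebra_simps)
qed

lemma linq_minus: "linq q (- (u::'a poly)) x = - linq q u x"
  unfolding linq_def by (simp add: sum_negf)

lemma linq_diff: "linq q ((u::'a poly) - v) x = linq q u x - linq q v x"
  using linq_add[of u "-v" x] linq_minus[of v x] by simp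

lemma linq_smult: "linq q (smult (c::'a) u) x = c * linq q u x"
  unfolding linq_def by (cases "c = 0") (auto simp: sum_distrib_left mult.assoc)

lemma linq_0: "linq q 0 (x::'a) = 0" unfolding linq_def by simp

lemma linq_monom: "linq q (monom (c::'a) k) x = c * x ^ (q ^ k)"
  using linq_sum[of "monom c k" "Suc k" x]
  by (cases "c = 0") (auto simp: degree_monom_eq coeff_monom)

lemma linq_1: "linq q 1 (x::'a) = x"
  using linq_monom[of 1 0 x] by (simp add: monom_0 one_pCons)

lemma linq_pCons: "linq q (pCons (c::'a) u) x = c * x + linq q u (x ^ q)"
proof -
  define N where "N = Suc (degree u)"
  have d: "degree (pCons c u) < Suc N" "degree u < N"
    by (auto simp: N_def degree_pCons_le le_less_trans)
  show ?thesis
    unfolding linq_sum[OF d(1)] linq_sum[OF d(2)] sum.lessThan_Suc_shift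
    by (simp add: power_mult[symmetric] mult.commute)
qed

lemma linq_arg_add: "linq q u ((x::'a) + y) = linq q u x + linq q u y"
  unfolding linq_def by (simp add: frob_add sum.distrib algebra_simps)

lemma linq_arg_0: "linq q u (0::'a) = 0"
  unfolding linq_def using q_gt1 by (simp add: power_0_left)

lemma linq_arg_diff: "linq q u ((x::'a) - y) = linq q u x - linq q u y"
  using linq_arg_add[of u "x - y" y] by simp

lemma linq_frob: "\<forall>i. coeff b i \<in> subfieldq q \<Longrightarrow> (linq q b (x::'a)) ^ q = linq q b (x ^ q)"
proof -
  assume b: "\<forall>i. coeff b i \<in> subfieldq q"
  have "(linq q b x) ^ q = (\<Sum>i\<le>degree b. (coeff b i * x ^ (q ^ i)) ^ q)"
    unfolding linq_def using frob_sum[of _ _ 1] by simp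
  also have "\<dots> = linq q b (x ^ q)"
    unfolding linq_def using b
    by (intro sum.cong refl) (simp add: power_mult_distrib subfieldq_def power_mult[symmetric] mult.commute)
  finally show ?thesis .
qed

lemma linq_comp: "\<forall>i. coeff b i \<in> subfieldq q \<Longrightarrow> linq q a (linq q b (x::'a)) = linq q (a * b) x"
proof (induction a arbitrary: x)
  case 0
  then show ?case by (simp add: linq_0)
next
  case (pCons c a)
  have "linq q (pCons c a * b) x = linq q (smult c b + pCons 0 (a * b)) x" by simp
  also have "\<dots> = c * linq q b x + linq q (a * b) (x ^ q)"
    by (simp add: linq_add linq_smult linq_pCons linq_0)
  also have "\<dots> = c * linq q b x + linq q a (linq q b (x ^ q))"
    using pCons by simp
  also have "\<dots> = linq q (pCons c a) (linq q b x)"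
    using pCons.prems by (simp add: linq_pCons linq_frob)
  finally show ?case by simp
qed



abbreviation "frm u \<equiv> map_poly (\<lambda>c::'a. c ^ q) u"

lemma fr0: "(0::'a) ^ q = 0" using q_gt1 by (simp add: power_0_left)

lemma frm_add: "frm (a + b) = frm a + frm b"
  by (rule poly_eqI) (simp add: coeff_map_poly fr0 frob_add1)

lemma frm_mult: "frm (a * b) = frm a * frm b"
proof (rule poly_eqI)
  fix k
  show "coeff (frm (a * b)) k = coeff (frm a * frm b) k"
    using frob_sum[of "\<lambda>i. coeff a i * coeff b (k - i)" "{..k}" 1]
    by (simp add: coeff_map_poly fr0 coeff_mult power_mult_distrib)
qed

lemma frm_fix: "\<forall>i. coeff u i \<in> subfieldq q \<Longrightarrow> frm u = u"
  by (rule poly_eqI) (simp add: coeff_map_poly fr0 subfieldq_def)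

lemma frm_fixD: "frm u = u \<Longrightarrow> \<forall>i. coeff u i \<in> subfieldq q"
proof
  fix i assume "frm u = u"
  then have "coeff u i = coeff (frm u) i" by simp
  also have "\<dots> = coeff u i ^ q" by (simp add: coeff_map_poly fr0)
  finally show "coeff u i \<in> subfieldq q" unfolding subfieldq_def by simp
qed

lemma frm_dvd: "a dvd b \<Longrightarrow> frm a dvd frm b"
proof -
  assume "a dvd b"
  then obtain c where "b = a * c" by (rule dvdE)
  then have "frm b = frm a * frm c" by (simp add: frm_mult)
  then show ?thesis by simp
qed

lemma uf_field: "(x::'a) \<noteq> 0 \<Longrightarrow> unit_factor x = x"
proof -
  assume "x \<noteq> 0"
  then have "is_unit x" using dvd_field_iff by blast
  then have "normalize x = 1" by (rule is_unit_normalize)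
  then show ?thesis using unit_factor_mult_normalize[of x] by simp
qed

lemma normalized_lead: assumes "normalize (g::'a poly) = g" "g \<noteq> 0" shows "lead_coeff g = 1"
proof -
  have "lead_coeff g = lead_coeff g div unit_factor (lead_coeff g)"
    using coeff_normalize[of g "degree g"] assms(1) by simp
  then show ?thesis using assms(2) uf_field[of "lead_coeff g"] by simp
qed

lemma Fpoly_div:
  assumes a: "\<forall>i. coeff (a::'a poly) i \<in> subfieldq q" and b: "\<forall>i. coeff b i \<in> subfieldq q"
    and "b \<noteq> 0" "b dvd a"
  shows "\<forall>i. coeff (a div b) i \<in> subfieldq q"
proof -
  define c where "c = a div b"
  have abc: "a = b * c" using assms(4) by (simp add: c_def)
  have "b * frm c = b * c" using frm_mult[of b c] frm_fix[OF a] frm_fix[OF b] abc by simp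
  then have "frm c = c" using assms(3) by simp
  then show ?thesis using frm_fixD c_def by simp
qed

lemma Fpoly_gcd:
  assumes a: "\<forall>i. coeff a i \<in> subfieldq q" and b: "\<forall>i. coeff b i \<in> subfieldq q"
  shows "\<forall>i. coeff (gcd a b :: 'a poly) i \<in> subfieldq q"
proof (cases "gcd a b = 0")
  case True then show ?thesis using sub_0 by simp
next
  case False
  define g where "g = gcd a b"
  obtain s t where st: "s * a + t * b = g"
    using bezout_coefficients_fst_snd[of a b] g_def by blast
  have "frm (s * a + t * b) = frm s * a + frm t * b"
    by (simp add: frm_add frm_mult frm_fix[OF a] frm_fix[OF b])
  then have fg: "frm s * a + frm t * b = frm g" using st by simp
  have "g dvd frm s * a + frm t * b" unfolding g_def
    by (intro dvd_add dvd_mult gcd_dvd1 gcd_dvd2)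
  then have "g dvd frm g" using fg by simp
  moreover have "frm g dvd g"
    using frm_dvd[of g a] frm_dvd[of g b] frm_fix[OF a] frm_fix[OF b] g_def by simp
  moreover have "normalize g = g" by (simp add: g_def)
  moreover have "normalize (frm g) = frm g"
  proof -
    have lg: "lead_coeff g = 1" using normalized_lead[of g] False g_def by simp
    then have "lead_coeff (frm g) = 1" using lead_coeff_map_poly_nz[of "\<lambda>c. c ^ q" g] fr0 by simp
    then show ?thesis by (intro poly_eqI) (simp add: coeff_normalize uf_field)
  qed
  ultimately have "frm g = g" using associated_eqI[of "frm g" g] by blast
  then show ?thesis using frm_fixD g_def by simp
qed

lemma Phi_coeff: "coeff (\<Sum>i<n. monom (1::'a) i) j = (if j < n then 1 else 0)"
  by (simp add: coeff_sum coeff_monom)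

lemma Phi_eq: "([:0,1:] ^ n - 1 :: 'a poly) = [:-1,1:] * (\<Sum>i<n. monom 1 i)"
proof (induction n)
  case (Suc n)
  have xp: "\<And>k. [:0,1:]^k = (monom 1 k :: 'a poly)" by (simp add: monom_altdef)
  have m: "[:-1,1:] * monom (1::'a) n = monom 1 (Suc n) - monom 1 n"
    by (simp add: xp[symmetric] algebra_simps)
  have "[:-1,1:] * (\<Sum>i<Suc n. monom (1::'a) i) = [:-1,1:] * (\<Sum>i<n. monom 1 i) + [:-1,1:] * monom 1 n"
    by (simp add: distrib_left)
  also have "\<dots> = [:0,1:] ^ Suc n - 1"
    unfolding m Suc.IH[symmetric] xp by simp
  finally show ?case by simp
qed simp

context
  fixes n :: nat
  assumes npos: "n > 0" and cardq: "card (UNIV :: 'a set) = q ^ n"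
begin

lemma pow_qn: "(x::'a) ^ (q ^ n) = x"
  using power_card_same[of x] cardq by simp

lemma tr_sub: "trace_qn q n (x::'a) \<in> subfieldq q"
proof -
  have "trace_qn q n x ^ q = (\<Sum>i<n. x ^ (q ^ Suc i))"
    unfolding trace_qn_def using frob_sum[of "\<lambda>i. x ^ (q ^ i)" "{..<n}" 1]
    by (simp add: power_mult[symmetric] mult.commute)
  also have "\<dots> = (\<Sum>i<Suc n. x ^ (q ^ i)) - x"
    by (subst sum.lessThan_Suc_shift) simp
  also have "\<dots> = trace_qn q n x"
    by (simp add: trace_qn_def pow_qn)
  finally show ?thesis unfolding subfieldq_def by simp
qed

lemma tr_add: "trace_qn q n ((x::'a) + y) = trace_qn q n x + trace_qn q n y"
  unfolding trace_qn_def by (simp add: frob_add sum.distrib)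

lemma tr_diff: "trace_qn q n ((x::'a) - y) = trace_qn q n x - trace_qn q n y"
  unfolding trace_qn_def by (simp add: frob_diff sum_subtractf)

lemma tr_0: "trace_qn q n (0::'a) = 0"
  unfolding trace_qn_def using q_gt1 by (simp add: power_0_left)

lemma tr_smult: "(c::'a) \<in> subfieldq q \<Longrightarrow> trace_qn q n (c * x) = c * trace_qn q n x"
  unfolding trace_qn_def by (simp add: power_mult_distrib sub_pow sum_distrib_left)

lemma tr_const: "(c::'a) \<in> subfieldq q \<Longrightarrow> trace_qn q n c = of_nat n * c"
  unfolding trace_qn_def by (simp add: sub_pow)

lemma tr_sum: "trace_qn q n (sum g A :: 'a) = (\<Sum>j\<in>A. trace_qn q n (g j))"
  unfolding trace_qn_def by (simp add: frob_sum sum.swap[of _ A])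

lemma tr_frob: "trace_qn q n ((x::'a) ^ (q ^ j)) = trace_qn q n x"
proof -
  have "trace_qn q n (x ^ (q ^ j)) = (trace_qn q n x) ^ (q ^ j)"
    unfolding trace_qn_def frob_sum
    by (simp add: power_mult[symmetric] mult.commute)
  then show ?thesis using sub_pow[OF tr_sub] by simp
qed

lemma tr_linq: "\<forall>i. coeff u i \<in> subfieldq q \<Longrightarrow> trace_qn q n (linq q u (x::'a)) = poly u 1 * trace_qn q n x"
proof -
  assume u: "\<forall>i. coeff u i \<in> subfieldq q"
  have "trace_qn q n (linq q u x) = (\<Sum>j\<le>degree u. coeff u j * trace_qn q n x)"
    unfolding linq_def tr_sum using u by (simp add: tr_smult tr_frob)
  also have "\<dots> = poly u 1 * trace_qn q n x"
    by (simp add: poly_altdef sum_distrib_right)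
  finally show ?thesis .
qed

lemma tr_Phi: "trace_qn q n (x::'a) = linq q (\<Sum>i<n. monom 1 i) x"
proof -
  have "degree (\<Sum>i<n. monom (1::'a) i) \<le> n - 1"
    by (rule degree_le) (auto simp: Phi_coeff)
  then have "degree (\<Sum>i<n. monom (1::'a) i) < n" using npos by linarith
  from linq_sum[OF this] show ?thesis
    by (simp add: Phi_coeff trace_qn_def)
qed

lemma linq_X: "linq q ([:0,1:] ^ n - 1) (y::'a) = 0"
  using linq_monom[of 1 n y] by (simp add: linq_diff linq_1 monom_altdef pow_qn)


lemma coeff_qsum: "coeff (\<Sum>i\<in>I. monom (c i) (q ^ i)) j = (\<Sum>i\<in>I. if q ^ i = j then (c i :: 'a) else 0)"
  by (simp add: coeff_sum coeff_monom)

lemma qpow_inj: "q ^ i = q ^ j \<longleftrightarrow> i = j"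
  using q_gt1 by (simp add: power_inject_exp)

lemma coeff_qsum_at: "finite I \<Longrightarrow> i0 \<in> I \<Longrightarrow> coeff (\<Sum>i\<in>I. monom (c i) (q ^ i)) (q ^ i0) = (c i0 :: 'a)"
  unfolding coeff_qsum qpow_inj by (simp add: eq_commute[of _ i0])

lemma degree_qsum: "finite I \<Longrightarrow> (\<forall>i\<in>I. i \<le> d) \<Longrightarrow> degree (\<Sum>i\<in>I. monom (c i :: 'a) (q ^ i)) \<le> q ^ d"
proof (intro degree_le allI impI)
  fix j assume "finite I" "\<forall>i\<in>I. i \<le> d" "q ^ d < j"
  then have "\<forall>i\<in>I. q ^ i \<noteq> j"
    using q_gt1 by (metis not_le power_increasing less_imp_le_nat order.strict_trans1 order_less_irrefl)
  then show "coeff (\<Sum>i\<in>I. monom (c i) (q ^ i)) j = 0"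
    unfolding coeff_qsum by simp
qed

lemma exists_nonroot:
  assumes "(e::'a poly) \<noteq> 0" "degree e < n"
  shows "\<exists>y. linq q e y \<noteq> 0"
proof (rule ccontr)
  assume "\<not> ?thesis"
  then have all0: "\<forall>y. linq q e y = 0" by simp
  define Le where "Le = (\<Sum>i\<le>degree e. monom (coeff e i) (q ^ i))"
  have pl: "poly Le y = linq q e y" for y
    by (simp add: Le_def linq_def poly_sum poly_monom)
  have "coeff Le (q ^ degree e) = lead_coeff e"
    unfolding Le_def by (rule coeff_qsum_at) auto
  then have Lnz: "Le \<noteq> 0" using assms(1) by auto
  have dL: "degree Le \<le> q ^ degree e" unfolding Le_def by (rule degree_qsum) auto
  have "q ^ degree e < q ^ n" using assms(2) q_gt1 by (simp add: power_strict_increasing)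
  with dL have "degree Le < card (UNIV :: 'a set)" using cardq by simp
  moreover have "{y. poly Le y = 0} = UNIV" using all0 pl by auto
  ultimately show False using card_poly_roots_bound[OF Lnz] by simp
qed

lemma card_ker: "card {x::'a. trace_qn q n x = 0} \<le> q ^ (n - 1)"
proof -
  define TP where "TP = (\<Sum>i<n. monom (1::'a) (q ^ i))"
  have pl: "poly TP x = trace_qn q n x" for x
    by (simp add: TP_def trace_qn_def poly_sum poly_monom)
  have "coeff TP (q ^ (n - 1)) = 1"
    unfolding TP_def by (rule coeff_qsum_at) (use npos in auto)
  then have Tnz: "TP \<noteq> 0" by auto
  have "degree TP \<le> q ^ (n - 1)" unfolding TP_def by (rule degree_qsum) auto
  then show ?thesis using card_poly_roots_bound[OF Tnz] pl by simp
qed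

lemma tr_surj: "trace_qn q n ` (UNIV::'a set) = subfieldq q"
  and fiber_card: "t \<in> subfieldq q \<Longrightarrow> card {x::'a. trace_qn q n x = t} = card {x::'a. trace_qn q n x = 0}"
  and ker_pos: "card {x::'a. trace_qn q n x = 0} > 0"
proof -
  define K where "K = {x::'a. trace_qn q n x = 0}"
  define I where "I = trace_qn q n ` (UNIV::'a set)"
  have fib: "{x. trace_qn q n x = t} = (+) x0 ` K" if "trace_qn q n x0 = t" for x0 t
  proof (rule set_eqI, rule iffI)
    fix x assume "x \<in> {x. trace_qn q n x = t}"
    then have "x - x0 \<in> K" "x = x0 + (x - x0)" using that by (auto simp: K_def tr_diff)
    then show "x \<in> (+) x0 ` K" by blast
  next
    fix x assume "x \<in> (+) x0 ` K"
    then show "x \<in> {x. trace_qn q n x = t}" using that by (auto simp: K_def tr_add)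
  qed
  have fibc: "card {x. trace_qn q n x = t} = card K" if tI: "t \<in> I" for t
  proof -
    obtain x0 where "trace_qn q n x0 = t" using tI I_def by auto
    then show ?thesis using fib[of x0 t] by (simp add: card_image)
  qed
  have "UNIV = (\<Union>t\<in>I. {x::'a. trace_qn q n x = t})" unfolding I_def by auto
  moreover have "card (\<Union>t\<in>I. {x::'a. trace_qn q n x = t}) = (\<Sum>t\<in>I. card {x::'a. trace_qn q n x = t})"
    by (rule card_UN_disjoint) auto
  ultimately have "card (UNIV::'a set) = (\<Sum>t\<in>I. card {x::'a. trace_qn q n x = t})"
    by simp
  also have "\<dots> = card I * card K" using fibc by simp
  finally have eq: "q ^ n = card I * card K" using cardq by simp
  have IF: "I \<subseteq> subfieldq q" unfolding I_def using tr_sub by auto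
  then have cI: "card I \<le> q" using card_sub card_mono[OF finite_sub IF] by linarith
  have cK: "card K \<le> q ^ (n - 1)" using card_ker K_def by simp
  have qn: "q ^ n = q * q ^ (n - 1)" using npos by (metis Suc_diff_1 power_Suc)
  have qpos: "q ^ (n - 1) > 0" using q_gt1 by simp
  have "card I = q"
  proof (rule ccontr)
    assume "card I \<noteq> q"
    then have "card I < q" using cI by simp
    then have "card I * card K \<le> card I * q ^ (n - 1)" using cK by simp
    also have "\<dots> < q * q ^ (n - 1)" using \<open>card I < q\<close> qpos by simp
    finally show False using eq qn by simp
  qed
  then have "card (subfieldq q :: 'a set) \<le> card I" using card_sub by simp
  then have IFe: "I = subfieldq q" using card_seteq[OF finite_sub IF] by simp
  then show "trace_qn q n ` (UNIV::'a set) = subfieldq q" unfolding I_def .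
  show "t \<in> subfieldq q \<Longrightarrow> card {x::'a. trace_qn q n x = t} = card {x::'a. trace_qn q n x = 0}"
    using fibc IFe K_def by simp
  have "q ^ n > 0" using q_gt1 by simp
  then have "card K > 0" using eq by (cases "card K = 0") auto
  then show "card {x::'a. trace_qn q n x = 0} > 0" using K_def by simp
qed


lemma Phi_div: "([:0,1:] ^ n - 1) div [:-1,1:] = (\<Sum>i<n. monom (1::'a) i)"
proof -
  have "[:-1,1::'a:] \<noteq> 0" by simp
  then show ?thesis by (subst Phi_eq) (rule nonzero_mult_div_cancel_left)
qed

lemma PhiF: "\<forall>i. coeff (\<Sum>i<n. monom (1::'a) i) i \<in> subfieldq q"
  by (simp add: Phi_coeff sub_0 sub_1)

lemma X_eq: "([:0,1:] ^ n - 1 :: 'a poly) = monom 1 n + (-1)"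
  by (simp add: monom_altdef)

lemma XF: "\<forall>i. coeff ([:0,1:] ^ n - 1 :: 'a poly) i \<in> subfieldq q"
proof
  fix i
  have "coeff ([:0,1:] ^ n - 1 :: 'a poly) i = coeff (monom 1 n) i - coeff 1 i"
    by (simp add: monom_altdef)
  moreover have "coeff (monom (1::'a) n) i \<in> subfieldq q" by (simp add: coeff_monom sub_0 sub_1)
  moreover have "coeff (1::'a poly) i \<in> subfieldq q" by (cases i) (simp_all add: sub_0 sub_1)
  ultimately show "coeff ([:0,1:] ^ n - 1 :: 'a poly) i \<in> subfieldq q" by (simp add: sub_diff)
qed

lemma X_deg: "degree ([:0,1:] ^ n - 1 :: 'a poly) = n"
  unfolding X_eq using npos by (subst degree_add_eq_left) (auto simp: degree_monom_eq)

lemma main_equiv: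
  fixes f h k :: "'a poly"
  assumes fF: "\<forall>i. coeff f i \<in> subfieldq q" and hF: "\<forall>i. coeff h i \<in> subfieldq q"
    and kF: "\<forall>i. coeff k i \<in> subfieldq q" and knz: "\<forall>x \<in> subfieldq q. poly k x \<noteq> 0"
  shows "bij (\<lambda>x. poly f (trace_qn q n x) + poly k (trace_qn q n x) * linq q h x) \<longleftrightarrow>
     gcd h (([:0,1:] ^ n - 1) div [:-1,1:]) = 1 \<and>
     bij_betw (\<lambda>x. of_nat n * poly f x + poly h 1 * poly k x * x) (subfieldq q) (subfieldq q)"
proof -
  define P where "P = (\<lambda>x. poly f (trace_qn q n x) + poly k (trace_qn q n x) * linq q h x)"
  define Q where "Q = (\<lambda>x. of_nat n * poly f x + poly h 1 * poly k x * x)"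
  define Phi where "Phi = (\<Sum>i<n. monom (1::'a) i)"
  define F where "F = (subfieldq q :: 'a set)"
  have TrF: "trace_qn q n x \<in> F" for x using tr_sub F_def by simp
  have QF: "Q t \<in> F" if "t \<in> F" for t
    using that unfolding Q_def F_def
    by (intro sub_add sub_mult sub_of_nat sub_poly fF hF kF sub_1) auto
  have trP: "trace_qn q n (P x) = Q (trace_qn q n x)" for x
  proof -
    have t: "trace_qn q n x \<in> F" by (rule TrF)
    have "trace_qn q n (P x) = trace_qn q n (poly f (trace_qn q n x)) +
        poly k (trace_qn q n x) * trace_qn q n (linq q h x)"
      unfolding P_def tr_add using t F_def kF by (simp add: tr_smult sub_poly)
    also have "\<dots> = Q (trace_qn q n x)"
      using t F_def fF hF by (simp add: tr_const sub_poly tr_linq Q_def algebra_simps)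
    finally show ?thesis .
  qed
  have bijQ: "bij_betw Q F F \<longleftrightarrow> inj_on Q F"
  proof
    assume "inj_on Q F"
    moreover have "Q ` F = F"
      using card_seteq[of F "Q ` F"] QF card_image[OF \<open>inj_on Q F\<close>] F_def by auto
    ultimately show "bij_betw Q F F" by (simp add: bij_betw_def)
  qed (rule bij_betw_imp_inj_on)
  have Phi_nz: "Phi \<noteq> 0"
  proof
    assume "Phi = 0"
    then have "coeff Phi 0 = 0" by simp
    then show False using npos by (simp add: Phi_def Phi_coeff)
  qed
  have PhiF': "\<forall>i. coeff Phi i \<in> subfieldq q" using PhiF Phi_def by simp
  have trPhi: "trace_qn q n x = linq q Phi x" for x using tr_Phi Phi_def by simp
  show ?thesis
    unfolding P_def[symmetric] Q_def[symmetric] F_def[symmetric] Phi_div Phi_def[symmetric] bijQ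
  proof
    assume bP: "bij P"
    have injQ: "inj_on Q F"
    proof (rule inj_onI)
      fix s s' assume s: "s \<in> F" "s' \<in> F" "Q s = Q s'"
      define c where "c = Q s"
      have cF: "c \<in> F" using QF s c_def by simp
      define A where "A = {t \<in> F. Q t = c}"
      define cK where "cK = card {x::'a. trace_qn q n x = 0}"
      have "card {x. trace_qn q n (P x) = c} = card (P -` {y. trace_qn q n y = c})" by simp
      also have "\<dots> = card {y. trace_qn q n y = c}"
      proof -
        have "inj_on P (P -` {y. trace_qn q n y = c})" using bP bij_is_inj inj_on_subset by blast
        then have "card (P -` {y. trace_qn q n y = c}) = card (P ` (P -` {y. trace_qn q n y = c}))"
          by (rule card_image[symmetric])
        also have "P ` (P -` {y. trace_qn q n y = c}) = {y. trace_qn q n y = c}"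
          using surj_image_vimage_eq[OF bij_is_surj[OF bP]] .
        finally show ?thesis .
      qed
      also have "\<dots> = cK" using fiber_card cF F_def cK_def by simp
      finally have c1: "card {x. trace_qn q n (P x) = c} = cK" .
      have "{x. trace_qn q n (P x) = c} = (\<Union>t\<in>A. {x. trace_qn q n x = t})"
        unfolding A_def trP using TrF by auto
      moreover have "card (\<Union>t\<in>A. {x. trace_qn q n x = t}) = (\<Sum>t\<in>A. card {x. trace_qn q n x = t})"
        by (rule card_UN_disjoint) auto
      ultimately have "card {x. trace_qn q n (P x) = c} = (\<Sum>t\<in>A. card {x. trace_qn q n x = t})"
        by simp
      also have "\<dots> = card A * cK"
        using fiber_card cK_def A_def F_def by simp
      finally have e2: "card {x. trace_qn q n (P x) = c} = card A * cK" .
      then have cA: "card A * cK = 1 * cK" using c1 by linarith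
      have "cK \<noteq> 0" using ker_pos cK_def by linarith
      then have "card A = 1" using cA by simp
      moreover have "s \<in> A" "s' \<in> A" using s c_def A_def by auto
      ultimately show "s = s'" using card_1_singletonE[OF \<open>card A = 1\<close>] by blast
    qed
    have "gcd h Phi = 1"
    proof (rule ccontr)
      assume g1: "gcd h Phi \<noteq> 1"
      define g where "g = gcd h Phi"
      have gnz: "g \<noteq> 0" using Phi_nz g_def by simp
      have lg: "lead_coeff g = 1" using normalized_lead[of g] gnz g_def by simp
      have dg: "degree g \<noteq> 0"
      proof
        assume "degree g = 0"
        then have "g = [:lead_coeff g:]" using degree_0_id[of g] by simp
        then show False using lg g1 g_def by (simp add: one_pCons)
      qed
      have gF: "\<forall>i. coeff g i \<in> subfieldq q" unfolding g_def by (rule Fpoly_gcd[OF hF PhiF'])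
      define X where "X = ([:0,1:] ^ n - 1 :: 'a poly)"
      have XPhi: "X = [:-1,1:] * Phi" unfolding X_def Phi_def by (rule Phi_eq)
      have gX: "g dvd X" unfolding XPhi g_def by (rule dvd_mult, rule gcd_dvd2)
      define e where "e = X div g"
      have eF: "\<forall>i. coeff e i \<in> subfieldq q"
        unfolding e_def by (rule Fpoly_div) (use XF X_def gF gnz gX in auto)
      have Xge: "X = g * e" using gX e_def by simp
      have Xnz: "X \<noteq> 0" using X_deg npos X_def by auto
      then have enz: "e \<noteq> 0" using Xge by auto
      have "degree X = degree g + degree e" using Xge gnz enz by (simp add: degree_mult_eq)
      then have de: "degree e < n" using X_deg X_def dg by simp
      obtain y where zy: "linq q e y \<noteq> 0" using exists_nonroot[OF enz de] by blast
      define z where "z = linq q e y"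
      have Lgz: "linq q g z = 0"
        unfolding z_def linq_comp[OF eF] Xge[symmetric] X_def by (rule linq_X)
      have "linq q h z = linq q (h div g * g) z" using g_def by simp
      also have "\<dots> = 0" unfolding linq_comp[OF gF, symmetric] Lgz by (rule linq_arg_0)
      finally have Lhz: "linq q h z = 0" .
      have "trace_qn q n z = linq q (Phi div g * g) z" using g_def trPhi by simp
      also have "\<dots> = 0" unfolding linq_comp[OF gF, symmetric] Lgz by (rule linq_arg_0)
      finally have Tz: "trace_qn q n z = 0" .
      have "P z = P 0" unfolding P_def using Lhz Tz by (simp add: tr_0 linq_arg_0)
      then have "z = 0" using injD[OF bij_is_inj[OF bP]] by blast
      then show False using zy z_def by simp
    qed
    with injQ show "gcd h Phi = 1 \<and> inj_on Q F" by simp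
  next
    assume as: "gcd h Phi = 1 \<and> inj_on Q F"
    have "inj P"
    proof (rule injI)
      fix x y assume Pxy: "P x = P y"
      have "Q (trace_qn q n x) = Q (trace_qn q n y)" using trP[of x] trP[of y] Pxy by simp
      then have Txy: "trace_qn q n x = trace_qn q n y" using inj_onD[OF conjunct2[OF as] _ TrF TrF] by blast
      have "poly k (trace_qn q n x) \<noteq> 0" using knz TrF F_def by simp
      then have "linq q h x = linq q h y" using Pxy Txy unfolding P_def by simp
      then have L0: "linq q h (x - y) = 0" by (simp add: linq_arg_diff)
      have T0: "linq q Phi (x - y) = 0" using Txy trPhi[of "x - y"] by (simp add: tr_diff)
      have "fst (bezout_coefficients h Phi) * h + snd (bezout_coefficients h Phi) * Phi = 1"
        using bezout_coefficients_fst_snd[of h Phi] as by simp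
      then obtain s t where st: "s * h + t * Phi = 1" by blast
      have "x - y = linq q (s * h + t * Phi) (x - y)" unfolding st by (simp add: linq_1)
      also have "\<dots> = 0"
        unfolding linq_add linq_comp[OF hF, symmetric] linq_comp[OF PhiF', symmetric] L0 T0
        by (simp add: linq_arg_0)
      finally show "x = y" by simp
    qed
    then show "bij P" using finite_UNIV_inj_surj[of P] by (simp add: bij_def)
  qed
qed

lemma bijF: "(\<forall>x \<in> subfieldq q. (g::'a \<Rightarrow> 'a) x \<in> subfieldq q) \<Longrightarrow>
    bij_betw g (subfieldq q) (subfieldq q :: 'a set) \<longleftrightarrow> inj_on g (subfieldq q)"
proof
  assume gF: "\<forall>x \<in> subfieldq q. g x \<in> subfieldq q" and ig: "inj_on g (subfieldq q)"
  have sub: "g ` subfieldq q \<subseteq> (subfieldq q :: 'a set)" using gF by auto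
  have "card (subfieldq q :: 'a set) \<le> card (g ` subfieldq q)" using card_image[OF ig] by simp
  then have "g ` subfieldq q = (subfieldq q :: 'a set)"
    using card_seteq[OF finite_sub sub] by simp
  with ig show "bij_betw g (subfieldq q) (subfieldq q :: 'a set)" by (simp add: bij_betw_def)
qed (rule bij_betw_imp_inj_on)

lemma inj_scale: "(c::'a) \<noteq> 0 \<Longrightarrow> inj_on (\<lambda>x. c * g x) A \<longleftrightarrow> inj_on g A"
  by (auto simp: inj_on_def)

lemma part2:
  fixes f h k :: "'a poly"
  assumes fF: "\<forall>i. coeff f i \<in> subfieldq q" and hF: "\<forall>i. coeff h i \<in> subfieldq q"
    and kF: "\<forall>i. coeff k i \<in> subfieldq q"
  shows "(gcd h (([:0,1:] ^ n - 1) div [:-1,1:]) = 1 \<and>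
     bij_betw (\<lambda>x. of_nat n * poly f x + poly h 1 * poly k x * x) (subfieldq q) (subfieldq q))
   \<longleftrightarrow> ((CHAR('a) dvd n \<and> gcd h ([:0, 1:] ^ n - 1) = 1 \<and>
               bij_betw (\<lambda>x. poly k x * x) (subfieldq q) (subfieldq q))
          \<or> (\<not> CHAR('a) dvd n \<and> gcd h ([:0, 1:] ^ n - 1) = [:-1, 1:] \<and>
               bij_betw (poly f) (subfieldq q) (subfieldq q))
          \<or> (\<not> CHAR('a) dvd n \<and> gcd h ([:0, 1:] ^ n - 1) = 1 \<and>
               bij_betw (\<lambda>x. of_nat n * poly f x + poly h 1 * poly k x * x)
                 (subfieldq q) (subfieldq q)))"
proof -
  define F where "F = (subfieldq q :: 'a set)"
  define Phi where "Phi = (\<Sum>i<n. monom (1::'a) i)"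
  define L where "L = [:-1, 1::'a:]"
  define X where "X = ([:0,1:] ^ n - 1 :: 'a poly)"
  define h1 where "h1 = poly h 1"
  define Q where "Q = (\<lambda>x. of_nat n * poly f x + h1 * poly k x * x)"
  have XL: "X = L * Phi" unfolding X_def L_def Phi_def by (rule Phi_eq)
  have pPhi: "poly Phi 1 = of_nat n" by (simp add: Phi_def poly_sum poly_monom)
  have pn: "CHAR('a) dvd n \<longleftrightarrow> of_nat n = (0::'a)" by (simp add: of_nat_eq_0_iff_char_dvd)
  have Lp: "prime_elem L" unfolding L_def by (rule prime_elem_linear_field_poly) simp
  have Ldvd: "L dvd u \<longleftrightarrow> poly u 1 = 0" for u
    unfolding L_def using poly_eq_0_iff_dvd[of u 1] by simp
  have Lnu: "\<not> is_unit L" using Lp by (simp add: prime_elem_not_unit)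
  have h1F: "h1 \<in> F" unfolding h1_def F_def by (rule sub_poly[OF hF sub_1])
  have fxF: "\<forall>x\<in>F. poly f x \<in> F" unfolding F_def using sub_poly[OF fF] by simp
  have kxF: "\<forall>x\<in>F. poly k x * x \<in> F"
  proof
    fix x assume "x \<in> F"
    then show "poly k x * x \<in> F" unfolding F_def by (intro sub_mult sub_poly[OF kF])
  qed
  have QF: "\<forall>x\<in>F. Q x \<in> F"
  proof
    fix x assume x: "x \<in> F"
    have "h1 * poly k x * x \<in> F" using x h1F unfolding F_def by (intro sub_mult sub_poly[OF kF])
    moreover have "of_nat n * poly f x \<in> F" using x unfolding F_def by (intro sub_mult sub_of_nat sub_poly[OF fF])
    ultimately show "Q x \<in> F" unfolding Q_def F_def by (rule sub_add[rotated])
  qed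
  have bQ: "bij_betw Q F F \<longleftrightarrow> inj_on Q F" using QF unfolding F_def by (rule bijF)
  have bk: "bij_betw (\<lambda>x. poly k x * x) F F \<longleftrightarrow> inj_on (\<lambda>x. poly k x * x) F"
    using kxF unfolding F_def by (rule bijF)
  have bf: "bij_betw (poly f) F F \<longleftrightarrow> inj_on (poly f) F" using fxF unfolding F_def by (rule bijF)
  have goal: "(gcd h Phi = 1 \<and> bij_betw Q F F) \<longleftrightarrow>
      ((CHAR('a) dvd n \<and> gcd h X = 1 \<and> bij_betw (\<lambda>x. poly k x * x) F F)
     \<or> (\<not> CHAR('a) dvd n \<and> gcd h X = L \<and> bij_betw (poly f) F F)
     \<or> (\<not> CHAR('a) dvd n \<and> gcd h X = 1 \<and> bij_betw Q F F))"
    by (rule core[OF L_def Q_def h1_def XL pPhi pn Lp Ldvd Lnu bQ bk bf])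
  show ?thesis using goal
    unfolding Phi_div F_def Phi_def X_def L_def Q_def h1_def .
qed

end

end

theorem corollary3p3:
  fixes f h k :: "'a::{finite,field_gcd} poly"
    and p q n m :: nat
  assumes "prime p" and "CHAR('a) = p" and "m > 0" and "q = p ^ m"
    and "n > 0" and "card (UNIV :: 'a set) = q ^ n"
    and "\<forall>i. coeff f i \<in> subfieldq q"
    and "\<forall>i. coeff h i \<in> subfieldq q"
    and "\<forall>i. coeff k i \<in> subfieldq q"
    and "\<forall>x \<in> subfieldq q. poly k x \<noteq> 0"
  defines "P \<equiv> (\<lambda>x. poly f (trace_qn q n x) + poly k (trace_qn q n x) * linq q h x)"
  shows "(bij P \<longleftrightarrow>
            gcd h (([:0, 1:] ^ n - 1) div [:-1, 1:]) = 1 \<and>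
            bij_betw (\<lambda>x. of_nat n * poly f x + poly h 1 * poly k x * x)
              (subfieldq q) (subfieldq q))
       \<and> (bij P \<longleftrightarrow>
            (p dvd n \<and> gcd h ([:0, 1:] ^ n - 1) = 1 \<and>
               bij_betw (\<lambda>x. poly k x * x) (subfieldq q) (subfieldq q))
          \<or> (\<not> p dvd n \<and> gcd h ([:0, 1:] ^ n - 1) = [:-1, 1:] \<and>
               bij_betw (poly f) (subfieldq q) (subfieldq q))
          \<or> (\<not> p dvd n \<and> gcd h ([:0, 1:] ^ n - 1) = 1 \<and>
               bij_betw (\<lambda>x. of_nat n * poly f x + poly h 1 * poly k x * x)
                 (subfieldq q) (subfieldq q)))"
proof -
  have pr: "prime CHAR('a)" using assms(1,2) by simp
  have qd: "q = CHAR('a) ^ m" using assms(2,4) by simp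
  note M = main_equiv[OF pr qd assms(3) assms(5) assms(6) assms(7) assms(8) assms(9) assms(10)]
  note T = part2[OF pr qd assms(3) assms(5) assms(6) assms(7) assms(8) assms(9)]
  show ?thesis using M T unfolding P_def assms(2) by simp
qed

end
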